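(* Let $R$ be a commutative local ring with maximal ideal $J$ and residue field $K=R/J$. Let $M$ be an $R$-module and $C$ an $R$-linear relation on $M$ such that $JM\subseteq (C^{-1})'+C'$ and such that $C^\sharp/C^\flat$ has finite dimension over $K$. Then there exists a free reduction $(X\mid\rho)$ of $(M,C)$ that meets in the radical.
   Context: An $R$-linear relation on $M$ is an $R$-submodule $C\subseteq M\oplus M$. For $m\in M$, $Cm=\{m'\in M:(m,m')\in C\}$; $C^{-1}=\{(y,x):(x,y)\in C\}$. Define submodules: $C''$ = set of $m\in M$ for which there is a sequence $(m_n)_{n\in\mathbb{N}}$ in $M$ with $m_0=m$ and $m_{n+1}\in Cm_n$ for all $n$; $C'$ = set of such $m$ for which such a sequence exists with additionally $m_n=0$ for $n\gg0$; $C^\sharp=C''\cap(C^{-1})''$; $C^\flat=C''\cap(C^{-1})'+(C^{-1})''\cap C'$. Then $C^\flat\subseteq C^\sharp$ and $C^\sharp/C^\flat$ is an $R$-module (annihilated by $J$ under the hypothesis, hence a $K$-vector space). A reduction of $(M,C)$ is a pair $(X\mid\rho)$ where $X$ is an $R[T,T^{-1}]$-module and $\rho\colon X\to M$ is $R$-linear with $C^\sharp=C^\flat+\mathrm{im}(\rho)$ and $\rho(Tx)\in C\rho(x)$ for all $x\in X$. It is free if $X$ is free as an $R$-module, and meets in the radical if $\{x\in X:\rho(x)\in C^\flat\}=\mathrm{rad}(X)$, the radical of $X$ as an $R$-module (intersection of maximal $R$-submodules). *)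

theory Defs
  imports Main "HOL-Library.Function_Algebras"
begin

text \<open>Commutative local ring: the non-units form an ideal (closed under addition);
  its maximal ideal J is the set of non-units.\<close>
definition local_ring :: "'r::comm_ring_1 itself \<Rightarrow> bool" where
  "local_ring _ \<longleftrightarrow> (\<forall>a b::'r. \<not> a dvd 1 \<and> \<not> b dvd 1 \<longrightarrow> \<not> (a + b) dvd 1)"

definition max_ideal :: "'r::comm_ring_1 set" where
  "max_ideal = {a. \<not> a dvd 1}"

definition is_module :: "('r::comm_ring_1 \<Rightarrow> 'b::ab_group_add \<Rightarrow> 'b) \<Rightarrow> bool" where
  "is_module s \<longleftrightarrow> (\<forall>a x y. s a (x + y) = s a x + s a y) \<and> (\<forall>a b x. s (a + b) x = s a x + s b x)
     \<and> (\<forall>a b x. s a (s b x) = s (a * b) x) \<and> (\<forall>x. s 1 x = x)"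

definition submod :: "('r \<Rightarrow> 'b \<Rightarrow> 'b) \<Rightarrow> 'b::ab_group_add set \<Rightarrow> bool" where
  "submod s S \<longleftrightarrow> 0 \<in> S \<and> (\<forall>x\<in>S. \<forall>y\<in>S. x + y \<in> S) \<and> (\<forall>c. \<forall>x\<in>S. s c x \<in> S)"

definition linear_relation :: "('r \<Rightarrow> 'm \<Rightarrow> 'm) \<Rightarrow> ('m::ab_group_add \<times> 'm) set \<Rightarrow> bool" where
  "linear_relation s C \<longleftrightarrow> (0, 0) \<in> C \<and>
     (\<forall>a b c d. (a, b) \<in> C \<and> (c, d) \<in> C \<longrightarrow> (a + c, b + d) \<in> C) \<and>
     (\<forall>r a b. (a, b) \<in> C \<longrightarrow> (s r a, s r b) \<in> C)"

definition rel_inv :: "('m \<times> 'm) set \<Rightarrow> ('m \<times> 'm) set" where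
  "rel_inv C = {(y, x). (x, y) \<in> C}"

definition rel_app :: "('m \<times> 'm) set \<Rightarrow> 'm \<Rightarrow> 'm set" where
  "rel_app C m = {m'. (m, m') \<in> C}"

definition dprime :: "('m \<times> 'm) set \<Rightarrow> 'm set" where
  "dprime C = {m. \<exists>f::nat \<Rightarrow> 'm. f 0 = m \<and> (\<forall>n. f (Suc n) \<in> rel_app C (f n))}"

definition sprime :: "('m::zero \<times> 'm) set \<Rightarrow> 'm set" where
  "sprime C = {m. \<exists>f::nat \<Rightarrow> 'm. f 0 = m \<and> (\<forall>n. f (Suc n) \<in> rel_app C (f n))
                    \<and> (\<exists>N. \<forall>n\<ge>N. f n = 0)}"

definition set_plus :: "'m::plus set \<Rightarrow> 'm set \<Rightarrow> 'm set" where
  "set_plus A B = {a + b | a b. a \<in> A \<and> b \<in> B}"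

definition sharp :: "('m \<times> 'm) set \<Rightarrow> 'm set" where
  "sharp C = dprime C \<inter> dprime (rel_inv C)"

definition flat :: "('m::{zero,plus} \<times> 'm) set \<Rightarrow> 'm set" where
  "flat C = set_plus (dprime C \<inter> sprime (rel_inv C)) (dprime (rel_inv C) \<inter> sprime C)"

definition rspan :: "('r::comm_ring_1 \<Rightarrow> 'b::ab_group_add \<Rightarrow> 'b) \<Rightarrow> 'b set \<Rightarrow> 'b set" where
  "rspan s B = {(\<Sum>a\<in>t. s (r a) a) | t r. finite t \<and> t \<subseteq> B}"

definition rdependent :: "('r::comm_ring_1 \<Rightarrow> 'b::ab_group_add \<Rightarrow> 'b) \<Rightarrow> 'b set \<Rightarrow> bool" where
  "rdependent s B \<longleftrightarrow> (\<exists>t u. finite t \<and> t \<subseteq> B \<and> (\<Sum>v\<in>t. s (u v) v) = 0 \<and> (\<exists>v\<in>t. u v \<noteq> 0))"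

definition JM :: "('r::comm_ring_1 \<Rightarrow> 'm::ab_group_add \<Rightarrow> 'm) \<Rightarrow> 'm set" where
  "JM s = rspan s {s r m | r m. r \<in> max_ideal}"

text \<open>C\<sharp>/C\<flat> is finite dimensional over K = R/J: finitely many cosets span it
  (the K-span of cosets coincides with their R-span since R acts through K).\<close>
definition fin_dim_quot :: "('r::comm_ring_1 \<Rightarrow> 'm::ab_group_add \<Rightarrow> 'm) \<Rightarrow> 'm set \<Rightarrow> 'm set \<Rightarrow> bool" where
  "fin_dim_quot s A B \<longleftrightarrow> (\<exists>S. finite S \<and> S \<subseteq> A \<and> A \<subseteq> set_plus B (rspan s S))"

definition fscale :: "'r::comm_ring_1 \<Rightarrow> (nat \<Rightarrow> 'r) \<Rightarrow> (nat \<Rightarrow> 'r)" where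
  "fscale c f = (\<lambda>n. c * f n)"

definition lin_on :: "('r \<Rightarrow> 'a \<Rightarrow> 'a) \<Rightarrow> ('r \<Rightarrow> 'b \<Rightarrow> 'b) \<Rightarrow> 'a::plus set \<Rightarrow> ('a \<Rightarrow> 'b::plus) \<Rightarrow> bool" where
  "lin_on s1 s2 X f \<longleftrightarrow> (\<forall>x\<in>X. \<forall>y\<in>X. f (x + y) = f x + f y) \<and> (\<forall>c. \<forall>x\<in>X. f (s1 c x) = s2 c (f x))"

text \<open>An R[T,T^{-1}]-module: an R-module X (here a submodule of nat \<Rightarrow> 'r) with an
  R-linear automorphism T (the action of T).\<close>
definition RT_module :: "(nat \<Rightarrow> 'r::comm_ring_1) set \<Rightarrow> ((nat \<Rightarrow> 'r) \<Rightarrow> (nat \<Rightarrow> 'r)) \<Rightarrow> bool" where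
  "RT_module X T \<longleftrightarrow> submod fscale X \<and> lin_on fscale fscale X T \<and> bij_betw T X X"

definition reduction ::
  "('r::comm_ring_1 \<Rightarrow> 'm::ab_group_add \<Rightarrow> 'm) \<Rightarrow> ('m \<times> 'm) set \<Rightarrow>
   (nat \<Rightarrow> 'r) set \<Rightarrow> ((nat \<Rightarrow> 'r) \<Rightarrow> (nat \<Rightarrow> 'r)) \<Rightarrow> ((nat \<Rightarrow> 'r) \<Rightarrow> 'm) \<Rightarrow> bool" where
  "reduction s C X T \<rho> \<longleftrightarrow> RT_module X T \<and> lin_on fscale s X \<rho>
     \<and> sharp C = set_plus (flat C) (\<rho> ` X)
     \<and> (\<forall>x\<in>X. \<rho> (T x) \<in> rel_app C (\<rho> x))"

definition free_mod :: "(nat \<Rightarrow> 'r::comm_ring_1) set \<Rightarrow> bool" where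
  "free_mod X \<longleftrightarrow> (\<exists>B\<subseteq>X. \<not> rdependent fscale B \<and> rspan fscale B = X)"

definition maximal_submod :: "(nat \<Rightarrow> 'r::comm_ring_1) set \<Rightarrow> (nat \<Rightarrow> 'r) set \<Rightarrow> bool" where
  "maximal_submod X N \<longleftrightarrow> submod fscale N \<and> N \<subseteq> X \<and> N \<noteq> X \<and>
     (\<forall>N'. submod fscale N' \<and> N \<subseteq> N' \<and> N' \<subseteq> X \<longrightarrow> N' = N \<or> N' = X)"

text \<open>Radical of X as R-module: intersection of maximal R-submodules (X if none).\<close>
definition rad :: "(nat \<Rightarrow> 'r::comm_ring_1) set \<Rightarrow> (nat \<Rightarrow> 'r) set" where
  "rad X = X \<inter> \<Inter>{N. maximal_submod X N}"

definition meets_in_radical ::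
  "('m::{zero,plus} \<times> 'm) set \<Rightarrow> (nat \<Rightarrow> 'r::comm_ring_1) set \<Rightarrow> ((nat \<Rightarrow> 'r) \<Rightarrow> 'm) \<Rightarrow> bool" where
  "meets_in_radical C X \<rho> \<longleftrightarrow> {x\<in>X. \<rho> x \<in> flat C} = rad X"

end

theory Submission
  imports Defs "Jordan_Normal_Form.Determinant"
begin
locale lr = fixes s :: "'r::comm_ring_1 \<Rightarrow> 'm::ab_group_add \<Rightarrow> 'm"
  assumes md: "is_module s"
begin

lemma s_add_right: "s a (x + y) = s a x + s a y" using md unfolding is_module_def by blast
lemma s_add_left: "s (a + b) x = s a x + s b x" using md unfolding is_module_def by blast
lemma s_assoc: "s a (s b x) = s (a * b) x" using md unfolding is_module_def by blast
lemma s_one[simp]: "s 1 x = x" using md unfolding is_module_def by blast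
lemma s_zero_right[simp]: "s a 0 = 0"
  using s_add_right[of a 0 0] by simp
lemma s_zero_left[simp]: "s 0 x = 0"
  using s_add_left[of 0 0 x] by simp
lemma s_neg_left: "s (- a) x = - s a x"
  using s_add_left[of a "-a" x] by (simp add: eq_neg_iff_add_eq_0 add.commute)
lemma s_neg_right: "s a (- x) = - s a x"
  using s_add_right[of a x "-x"] by (simp add: eq_neg_iff_add_eq_0 add.commute)
lemma s_diff_right: "s a (x - y) = s a x - s a y"
  using s_add_right[of a x "-y"] s_neg_right by simp
lemma s_diff_left: "s (a - b) x = s a x - s b x"
  using s_add_left[of a "-b" x] s_neg_left by simp
lemma s_sum_right: "s a (sum f I) = (\<Sum>i\<in>I. s a (f i))"
  by (induction I rule: infinite_finite_induct) (auto simp: s_add_right)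
lemma s_sum_left: "s (sum f I) x = (\<Sum>i\<in>I. s (f i) x)"
  by (induction I rule: infinite_finite_induct) (auto simp: s_add_left)

lemma submod_add: "submod s N \<Longrightarrow> x \<in> N \<Longrightarrow> y \<in> N \<Longrightarrow> x + y \<in> N"
  unfolding submod_def by blast
lemma submod_0: "submod s N \<Longrightarrow> 0 \<in> N"
  unfolding submod_def by blast
lemma submod_s: "submod s N \<Longrightarrow> x \<in> N \<Longrightarrow> s c x \<in> N"
  unfolding submod_def by blast
lemma submod_neg: "submod s N \<Longrightarrow> x \<in> N \<Longrightarrow> - x \<in> N"
  using submod_s[of N x "-1"] s_neg_left[of 1 x] by simp
lemma submod_diff: "submod s N \<Longrightarrow> x \<in> N \<Longrightarrow> y \<in> N \<Longrightarrow> x - y \<in> N"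
  using submod_add[of N x "-y"] submod_neg by simp
lemma submod_sum: "submod s N \<Longrightarrow> (\<And>i. i \<in> I \<Longrightarrow> f i \<in> N) \<Longrightarrow> sum f I \<in> N"
  by (induction I rule: infinite_finite_induct) (auto simp: submod_0 submod_add)

lemma submod_plus: assumes "submod s A" "submod s B" shows "submod s (set_plus A B)"
proof -
  have "0 \<in> set_plus A B" unfolding set_plus_def using assms submod_0 by force
  moreover have "x + y \<in> set_plus A B" if xy: "x \<in> set_plus A B" "y \<in> set_plus A B" for x y
  proof -
    obtain a b a' b' where "x = a + b" "y = a' + b'" "a \<in> A" "b \<in> B" "a' \<in> A" "b' \<in> B"
      using xy unfolding set_plus_def by blast
    then show ?thesis unfolding set_plus_def using assms submod_add
      by (smt (verit, best) add.assoc add.commute mem_Collect_eq)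
  qed
  moreover have "s c x \<in> set_plus A B" if xx: "x \<in> set_plus A B" for x c
  proof -
    obtain a b where "x = a + b" "a \<in> A" "b \<in> B"
      using xx unfolding set_plus_def by blast
    then show ?thesis unfolding set_plus_def using assms submod_s s_add_right by blast
  qed
  ultimately show ?thesis unfolding submod_def by blast
qed

lemma set_plus_mono: "A \<subseteq> A' \<Longrightarrow> B \<subseteq> B' \<Longrightarrow> set_plus A B \<subseteq> set_plus A' B'"
  unfolding set_plus_def by blast

lemma set_plus_least: "submod s N \<Longrightarrow> A \<subseteq> N \<Longrightarrow> B \<subseteq> N \<Longrightarrow> set_plus A B \<subseteq> N"
  unfolding set_plus_def using submod_add by blast

lemma set_plus_left: "submod s B \<Longrightarrow> A \<subseteq> set_plus A B"
  unfolding set_plus_def using submod_0 by force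

lemma set_plus_right: "submod s A \<Longrightarrow> B \<subseteq> set_plus A B"
  unfolding set_plus_def using submod_0 by force

lemma rspan_submod: "submod s (rspan s B)"
proof -
  have "0 \<in> rspan s B" unfolding rspan_def by (rule CollectI, rule exI[of _ "{}"], auto)
  moreover have "x + y \<in> rspan s B" if xy: "x \<in> rspan s B" "y \<in> rspan s B" for x y
  proof -
    obtain t r t' r' where x: "x = (\<Sum>a\<in>t. s (r a) a)" "finite t" "t \<subseteq> B"
      and y: "y = (\<Sum>a\<in>t'. s (r' a) a)" "finite t'" "t' \<subseteq> B"
      using xy unfolding rspan_def by blast
    define q where "q a = (if a \<in> t then r a else 0) + (if a \<in> t' then r' a else 0)" for a
    have "(\<Sum>a\<in>t \<union> t'. s (q a) a) = (\<Sum>a\<in>t \<union> t'. s (if a \<in> t then r a else 0) a)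
       + (\<Sum>a\<in>t \<union> t'. s (if a \<in> t' then r' a else 0) a)"
      unfolding q_def s_add_left sum.distrib by simp
    also have "(\<Sum>a\<in>t \<union> t'. s (if a \<in> t then r a else 0) a) = x"
      unfolding x by (rule sum.mono_neutral_cong_right) (use x y in auto)
    also have "(\<Sum>a\<in>t \<union> t'. s (if a \<in> t' then r' a else 0) a) = y"
      unfolding y by (rule sum.mono_neutral_cong_right) (use x y in auto)
    finally have "x + y = (\<Sum>a\<in>t \<union> t'. s (q a) a)" ..
    then show ?thesis unfolding rspan_def using x y by blast
  qed
  moreover have "s c x \<in> rspan s B" if xx: "x \<in> rspan s B" for x c
  proof -
    obtain t r where x: "x = (\<Sum>a\<in>t. s (r a) a)" "finite t" "t \<subseteq> B"
      using xx unfolding rspan_def by blast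
    have "s c x = (\<Sum>a\<in>t. s (c * r a) a)" unfolding x s_sum_right s_assoc ..
    then show ?thesis unfolding rspan_def using x(2,3)
      by (intro CollectI exI[of _ t] exI[of _ "\<lambda>a. c * r a"]) auto
  qed
  ultimately show ?thesis unfolding submod_def by blast
qed

lemma rspan_base: "B \<subseteq> rspan s B"
proof
  fix b assume "b \<in> B"
  then have "b = (\<Sum>a\<in>{b}. s ((\<lambda>_. 1) a) a)" "finite {b}" "{b} \<subseteq> B" by auto
  then show "b \<in> rspan s B" unfolding rspan_def
    by (intro CollectI exI[of _ "{b}"] exI[of _ "\<lambda>_. 1"]) auto
qed

lemma rspan_least: assumes "submod s N" "B \<subseteq> N" shows "rspan s B \<subseteq> N"
proof
  fix x assume "x \<in> rspan s B"
  then obtain t r where x: "x = (\<Sum>a\<in>t. s (r a) a)" "t \<subseteq> B"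
    unfolding rspan_def by blast
  show "x \<in> N" unfolding x(1) using assms x(2) by (intro submod_sum submod_s) auto
qed

end

context lr begin

abbreviation "LR P \<equiv> linear_relation s P"

lemma lr_0: "LR P \<Longrightarrow> (0,0) \<in> P" unfolding linear_relation_def by blast
lemma lr_add: "LR P \<Longrightarrow> (a,b) \<in> P \<Longrightarrow> (c,d) \<in> P \<Longrightarrow> (a+c,b+d) \<in> P"
  unfolding linear_relation_def by blast
lemma lr_s: "LR P \<Longrightarrow> (a,b) \<in> P \<Longrightarrow> (s r a, s r b) \<in> P"
  unfolding linear_relation_def by blast
lemma lr_neg: "LR P \<Longrightarrow> (a,b) \<in> P \<Longrightarrow> (-a, -b) \<in> P"
  using lr_s[of P a b "-1"] by (simp add: s_neg_left)
lemma lr_diff: "LR P \<Longrightarrow> (a,b) \<in> P \<Longrightarrow> (c,d) \<in> P \<Longrightarrow> (a-c,b-d) \<in> P"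
  using lr_add[of P a b "-c" "-d"] lr_neg by simp
lemma lr_sum: "LR P \<Longrightarrow> (\<And>i. i \<in> I \<Longrightarrow> (a i, b i) \<in> P) \<Longrightarrow> (sum a I, sum b I) \<in> P"
  by (induction I rule: infinite_finite_induct) (auto simp: lr_0 lr_add)

lemma rel_inv_iff[simp]: "(a,b) \<in> rel_inv P \<longleftrightarrow> (b,a) \<in> P"
  unfolding rel_inv_def by auto
lemma rel_inv_inv[simp]: "rel_inv (rel_inv P) = P"
  unfolding rel_inv_def by auto
lemma lr_inv: "LR P \<Longrightarrow> LR (rel_inv P)"
  unfolding linear_relation_def rel_inv_def by auto

lemma d_tail: assumes "m \<in> dprime P" shows "\<exists>m'. (m,m') \<in> P \<and> m' \<in> dprime P"
proof -
  obtain f where f: "f 0 = m" "\<And>n. (f n, f (Suc n)) \<in> P"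
    using assms unfolding dprime_def rel_app_def by auto
  have "f 1 \<in> dprime P" unfolding dprime_def rel_app_def
    by (rule CollectI, rule exI[of _ "\<lambda>n. f (Suc n)"]) (use f in auto)
  then show ?thesis using f(2)[of 0] f(1) by auto
qed

lemma d_cons: assumes "(m,m') \<in> P" "m' \<in> dprime P" shows "m \<in> dprime P"
proof -
  obtain f where f: "f 0 = m'" "\<And>n. (f n, f (Suc n)) \<in> P"
    using assms unfolding dprime_def rel_app_def by auto
  show ?thesis unfolding dprime_def rel_app_def
    by (rule CollectI, rule exI[of _ "\<lambda>n. case n of 0 \<Rightarrow> m | Suc k \<Rightarrow> f k"])
      (use f assms in \<open>auto split: nat.split\<close>)
qed

lemma s_tail: assumes "m \<in> sprime P" shows "\<exists>m'. (m,m') \<in> P \<and> m' \<in> sprime P"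
proof -
  obtain f N where f: "f 0 = m" "\<And>n. (f n, f (Suc n)) \<in> P" "\<And>n. n \<ge> N \<Longrightarrow> f n = 0"
    using assms unfolding sprime_def rel_app_def by auto
  have "f 1 \<in> sprime P" unfolding sprime_def rel_app_def
    by (intro CollectI exI[of _ "\<lambda>n. f (Suc n)"] conjI exI[of _ N]) (use f in auto)
  then show ?thesis using f(2)[of 0] f(1) by auto
qed

lemma s_cons: assumes "(m,m') \<in> P" "m' \<in> sprime P" shows "m \<in> sprime P"
proof -
  obtain f N where f: "f 0 = m'" "\<And>n. (f n, f (Suc n)) \<in> P" "\<And>n. n \<ge> N \<Longrightarrow> f n = 0"
    using assms unfolding sprime_def rel_app_def by auto
  have "\<forall>n\<ge>Suc N. (case n of 0 \<Rightarrow> m | Suc k \<Rightarrow> f k) = 0"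
    using f(3) by (auto split: nat.split)
  then show ?thesis unfolding sprime_def rel_app_def
    by (intro CollectI exI[of _ "\<lambda>n. case n of 0 \<Rightarrow> m | Suc k \<Rightarrow> f k"] conjI)
      (use f assms in \<open>auto split: nat.split\<close>)
qed

lemma s_sub_d: "LR P \<Longrightarrow> sprime P \<subseteq> dprime P"
  unfolding sprime_def dprime_def by blast

lemma d_submod: assumes "LR P" shows "submod s (dprime P)"
proof -
  have "0 \<in> dprime P" unfolding dprime_def rel_app_def
    by (rule CollectI, rule exI[of _ "\<lambda>n. 0"]) (use assms lr_0 in auto)
  moreover have "x + y \<in> dprime P" if xy: "x \<in> dprime P" "y \<in> dprime P" for x y
  proof -
    obtain f g where "f 0 = x" "\<And>n. (f n, f (Suc n)) \<in> P" "g 0 = y" "\<And>n. (g n, g (Suc n)) \<in> P"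
      using xy unfolding dprime_def rel_app_def by auto
    then show ?thesis unfolding dprime_def rel_app_def
      by (intro CollectI exI[of _ "\<lambda>n. f n + g n"]) (use assms lr_add in auto)
  qed
  moreover have "s c x \<in> dprime P" if xx: "x \<in> dprime P" for x c
  proof -
    obtain f where "f 0 = x" "\<And>n. (f n, f (Suc n)) \<in> P"
      using xx unfolding dprime_def rel_app_def by auto
    then show ?thesis unfolding dprime_def rel_app_def
      by (intro CollectI exI[of _ "\<lambda>n. s c (f n)"]) (use assms lr_s in auto)
  qed
  ultimately show ?thesis unfolding submod_def by blast
qed

lemma s_submod: assumes "LR P" shows "submod s (sprime P)"
proof -
  have "0 \<in> sprime P" unfolding sprime_def rel_app_def
    by (rule CollectI, rule exI[of _ "\<lambda>n. 0"]) (use assms lr_0 in auto)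
  moreover have "x + y \<in> sprime P" if xy: "x \<in> sprime P" "y \<in> sprime P" for x y
  proof -
    obtain f g N N' where "f 0 = x" "\<And>n. (f n, f (Suc n)) \<in> P" "g 0 = y" "\<And>n. (g n, g (Suc n)) \<in> P"
      "\<And>n. n \<ge> N \<Longrightarrow> f n = 0" "\<And>n. n \<ge> N' \<Longrightarrow> g n = 0"
      using xy unfolding sprime_def rel_app_def by (auto 0 0) metis
    then show ?thesis unfolding sprime_def rel_app_def
      by (intro CollectI exI[of _ "\<lambda>n. f n + g n"] conjI exI[of _ "max N N'"]) (use assms lr_add in auto)
  qed
  moreover have "s c x \<in> sprime P" if xx: "x \<in> sprime P" for x c
  proof -
    obtain f N where "f 0 = x" "\<And>n. (f n, f (Suc n)) \<in> P" "\<And>n. n \<ge> N \<Longrightarrow> f n = 0"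
      using xx unfolding sprime_def rel_app_def by auto
    then show ?thesis unfolding sprime_def rel_app_def
      by (intro CollectI exI[of _ "\<lambda>n. s c (f n)"] conjI exI[of _ N]) (use assms lr_s in auto)
  qed
  ultimately show ?thesis unfolding submod_def by blast
qed

lemma s_chain: assumes "m \<in> sprime P" "m \<in> dprime (rel_inv P)"
  shows "\<exists>f N. f 0 = m \<and> (\<forall>k. (f k, f (Suc k)) \<in> P) \<and> (\<forall>k\<ge>N. f k = 0)
     \<and> (\<forall>k. f k \<in> sprime P \<and> f k \<in> dprime (rel_inv P))"
proof -
  obtain f N where f: "f 0 = m" "\<And>n. (f n, f (Suc n)) \<in> P" "\<And>n. n \<ge> N \<Longrightarrow> f n = 0"
    using assms unfolding sprime_def rel_app_def by auto
  have "f k \<in> sprime P" for k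
    unfolding sprime_def rel_app_def
    by (intro CollectI exI[of _ "\<lambda>n. f (n + k)"] conjI exI[of _ N]) (use f in auto)
  moreover have "f k \<in> dprime (rel_inv P)" for k
  proof (induction k)
    case 0 then show ?case using f assms by simp
  next
    case (Suc k) then show ?case using d_cons[of "f (Suc k)" "f k" "rel_inv P"] f(2) by simp
  qed
  ultimately show ?thesis using f by blast
qed

end

lemma J_0: "(0::'r::comm_ring_1) \<in> max_ideal" unfolding max_ideal_def by simp
lemma J_add: "local_ring TYPE('r::comm_ring_1) \<Longrightarrow> (a::'r) \<in> max_ideal \<Longrightarrow> b \<in> max_ideal \<Longrightarrow> a + b \<in> max_ideal"
  unfolding max_ideal_def local_ring_def by blast
lemma J_mult: "(a::'r::comm_ring_1) \<in> max_ideal \<Longrightarrow> r * a \<in> max_ideal"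
  unfolding max_ideal_def using dvd_mult_right by blast
lemma J_mult2: "(a::'r::comm_ring_1) \<in> max_ideal \<Longrightarrow> a * r \<in> max_ideal"
  using J_mult[of a r] by (simp add: mult.commute)
lemma J_neg: "(a::'r::comm_ring_1) \<in> max_ideal \<Longrightarrow> - a \<in> max_ideal"
  unfolding max_ideal_def by simp
lemma J_diff: "local_ring TYPE('r::comm_ring_1) \<Longrightarrow> (a::'r) \<in> max_ideal \<Longrightarrow> b \<in> max_ideal \<Longrightarrow> a - b \<in> max_ideal"
  using J_add[of a "-b"] J_neg by auto
lemma J_sum: "local_ring TYPE('r::comm_ring_1) \<Longrightarrow> (\<And>i. i \<in> I \<Longrightarrow> (f i::'r) \<in> max_ideal) \<Longrightarrow> sum f I \<in> max_ideal"
  by (induction I rule: infinite_finite_induct) (auto simp: J_0 J_add)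
lemma J_unit: "local_ring TYPE('r::comm_ring_1) \<Longrightarrow> (a::'r) \<in> max_ideal \<Longrightarrow> (1 - a) dvd 1"
proof (rule ccontr)
  assume lr: "local_ring TYPE('r)" and a: "a \<in> max_ideal" and n: "\<not> (1 - a) dvd 1"
  have "\<not> (a + (1 - a)) dvd 1" using lr a n unfolding local_ring_def max_ideal_def by blast
  then show False by simp
qed
lemma notJ: "(a::'r::comm_ring_1) \<notin> max_ideal \<Longrightarrow> a dvd 1"
  unfolding max_ideal_def by simp
lemma one_notJ: "(1::'r::comm_ring_1) \<notin> max_ideal"
  unfolding max_ideal_def by simp

locale ctx = lr s for s :: "'r::comm_ring_1 \<Rightarrow> 'm::ab_group_add \<Rightarrow> 'm" +
  fixes C :: "('m \<times> 'm) set"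
  assumes loc: "local_ring TYPE('r)"
    and lrC: "linear_relation s C"
    and jm: "JM s \<subseteq> set_plus (sprime (rel_inv C)) (sprime C)"
begin

lemma lrCi: "LR (rel_inv C)" using lrC lr_inv by blast

lemma sharp_submod: "submod s (sharp C)"
proof -
  have "submod s (dprime C)" "submod s (dprime (rel_inv C))" using d_submod lrC lrCi by auto
  then show ?thesis unfolding sharp_def submod_def by blast
qed

lemma inter_submod: "submod s A \<Longrightarrow> submod s B \<Longrightarrow> submod s (A \<inter> B)"
  unfolding submod_def by blast

lemma flat_submod: "submod s (flat C)"
  unfolding flat_def
  by (intro submod_plus inter_submod d_submod s_submod lrC lrCi)

lemma flat_sub_sharp: "flat C \<subseteq> sharp C"
proof -
  have "dprime C \<inter> sprime (rel_inv C) \<subseteq> sharp C" "dprime (rel_inv C) \<inter> sprime C \<subseteq> sharp C"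
    unfolding sharp_def using s_sub_d lrC lrCi by blast+
  then show ?thesis unfolding flat_def using set_plus_least sharp_submod by blast
qed

lemma sharp_inv: "sharp (rel_inv C) = sharp C" unfolding sharp_def by auto

lemma succ: assumes "m \<in> sharp C" shows "\<exists>m'\<in>sharp C. (m, m') \<in> C"
proof -
  have "m \<in> dprime C" using assms unfolding sharp_def by blast
  then obtain m' where "(m,m') \<in> C" "m' \<in> dprime C" using d_tail[of m C] by blast
  moreover have "m' \<in> dprime (rel_inv C)" using d_cons[of m' m "rel_inv C"] assms calculation
    unfolding sharp_def by simp
  ultimately show ?thesis unfolding sharp_def by blast
qed

lemma pred: assumes "m \<in> sharp C" shows "\<exists>p\<in>sharp C. (p, m) \<in> C"
proof -
  have "m \<in> dprime (rel_inv C)" using assms unfolding sharp_def by blast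
  then obtain p where "(m,p) \<in> rel_inv C" "p \<in> dprime (rel_inv C)" using d_tail[of m "rel_inv C"] by blast
  moreover have "p \<in> dprime C" using d_cons[of p m C] assms calculation
    unfolding sharp_def by simp
  ultimately show ?thesis unfolding sharp_def by auto
qed

lemma flat_fwd: assumes "m \<in> flat C" "(m, m') \<in> C" "m' \<in> sharp C" shows "m' \<in> flat C"
proof -
  obtain a b where ab: "m = a + b" "a \<in> dprime C" "a \<in> sprime (rel_inv C)" "b \<in> dprime (rel_inv C)" "b \<in> sprime C"
    using assms(1) unfolding flat_def set_plus_def by blast
  obtain a' where a': "(a, a') \<in> C" "a' \<in> dprime C" using d_tail[of a C] ab by blast
  have a's: "a' \<in> sprime (rel_inv C)" using s_cons[of a' a "rel_inv C"] a' ab by simp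
  obtain b1 where b1: "(b, b1) \<in> C" "b1 \<in> sprime C" using s_tail[of b C] ab by blast
  have b1d: "b1 \<in> dprime (rel_inv C)" using d_cons[of b1 b "rel_inv C"] b1 ab by simp
  define c where "c = m' - a' - b1"
  have "(m - a - b, m' - a' - b1) \<in> C" using lr_diff[OF lrC lr_diff[OF lrC assms(2) a'(1)] b1(1)] .
  then have "(m - a - b, c) \<in> C" unfolding c_def .
  then have c0: "(0, c) \<in> C" using ab by simp
  have "0 \<in> sprime (rel_inv C)" using s_submod[OF lrCi] submod_0 by blast
  then have cs: "c \<in> sprime (rel_inv C)" using s_cons[of c 0 "rel_inv C"] c0 by auto
  have "b1 \<in> dprime C" using b1 s_sub_d[OF lrC] by blast
  moreover have "m' \<in> dprime C" using assms(3) unfolding sharp_def by blast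
  ultimately have cd: "c \<in> dprime C" unfolding c_def using a' submod_diff[OF d_submod[OF lrC]] by blast
  have "m' = (a' + c) + b1" unfolding c_def by simp
  moreover have "a' + c \<in> dprime C \<inter> sprime (rel_inv C)"
    using a' a's cs cd submod_add[OF d_submod[OF lrC]] submod_add[OF s_submod[OF lrCi]] by blast
  ultimately show ?thesis unfolding flat_def set_plus_def using b1 b1d by blast
qed

lemma JC: assumes "r \<in> max_ideal" "m \<in> sharp C" shows "s r m \<in> flat C"
proof -
  have "s r m = (\<Sum>a\<in>{s r m}. s ((\<lambda>_. 1) a) a)" by simp
  moreover have "s r m \<in> {s r m | r m. r \<in> max_ideal}" using assms(1) by blast
  ultimately have "s r m \<in> JM s" unfolding JM_def using rspan_base[of "{s r m | r m. r \<in> max_ideal}"] by blast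
  then obtain u v where uv: "s r m = u + v" "u \<in> sprime (rel_inv C)" "v \<in> sprime C"
    using jm unfolding set_plus_def by blast
  have srm: "s r m \<in> sharp C" using assms submod_s[OF sharp_submod] by blast
  have dv: "v \<in> dprime C" using uv s_sub_d[OF lrC] by blast
  have dsrm: "s r m \<in> dprime C" using srm unfolding sharp_def by blast
  have du: "u \<in> dprime (rel_inv C)" using uv s_sub_d[OF lrCi] by blast
  have dsrm': "s r m \<in> dprime (rel_inv C)" using srm unfolding sharp_def by blast
  have "u = s r m - v" using uv by (simp add: algebra_simps)
  then have u1: "u \<in> dprime C" using submod_diff[OF d_submod[OF lrC] dsrm dv] by simp
  have "v = s r m - u" using uv by (simp add: algebra_simps)
  then have v1: "v \<in> dprime (rel_inv C)" using submod_diff[OF d_submod[OF lrCi] dsrm' du] by simp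
  show ?thesis unfolding flat_def set_plus_def using uv u1 v1 by blast
qed

end

context ctx begin

lemma exists_min:
  assumes "fin_dim_quot s (sharp C) (flat C)"
  shows "\<exists>S. finite S \<and> S \<subseteq> sharp C \<and> sharp C \<subseteq> set_plus (flat C) (rspan s S) \<and>
    (\<forall>S'. finite S' \<and> S' \<subseteq> sharp C \<and> sharp C \<subseteq> set_plus (flat C) (rspan s S') \<longrightarrow> card S \<le> card S')"
proof -
  let ?P = "\<lambda>S. finite S \<and> S \<subseteq> sharp C \<and> sharp C \<subseteq> set_plus (flat C) (rspan s S)"
  obtain S0 where "?P S0" using assms unfolding fin_dim_quot_def by blast
  from ex_has_least_nat[of ?P S0 card, OF this] show ?thesis by blast
qed

end

locale bas = ctx s C for s :: "'r::comm_ring_1 \<Rightarrow> 'm::ab_group_add \<Rightarrow> 'm" and C +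
  fixes S :: "'m set" and m :: "nat \<Rightarrow> 'm" and n :: nat
  assumes finS: "finite S" and Ssh: "S \<subseteq> sharp C" and Sspan: "sharp C \<subseteq> set_plus (flat C) (rspan s S)"
    and Smin: "\<And>S'. finite S' \<Longrightarrow> S' \<subseteq> sharp C \<Longrightarrow> sharp C \<subseteq> set_plus (flat C) (rspan s S') \<Longrightarrow> card S \<le> card S'"
    and mbij: "bij_betw m {..<n} S"
begin

definition comb :: "(nat \<Rightarrow> 'r) \<Rightarrow> 'm" where "comb c = (\<Sum>i<n. s (c i) (m i))"

lemma m_sharp: "i < n \<Longrightarrow> m i \<in> sharp C"
  using mbij Ssh unfolding bij_betw_def by auto

lemma m_inj: "i < n \<Longrightarrow> j < n \<Longrightarrow> m i = m j \<Longrightarrow> i = j"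
  using mbij unfolding bij_betw_def inj_on_def by auto

lemma comb_delta: "k < n \<Longrightarrow> comb (\<lambda>i. if i = k then 1 else 0) = m k"
proof -
  assume k: "k < n"
  have "comb (\<lambda>i. if i = k then 1 else 0) = (\<Sum>i<n. if i = k then m i else 0)"
    unfolding comb_def by (rule sum.cong) auto
  also have "\<dots> = m k" using k by (simp add: sum.delta')
  finally show ?thesis .
qed

lemma Lin_submod: "submod s {comb c | c. True}"
proof -
  have z: "0 = comb (\<lambda>_. 0)" unfolding comb_def by simp
  have p: "comb c + comb c' = comb (\<lambda>i. c i + c' i)" for c c'
    unfolding comb_def s_add_left sum.distrib ..
  have q: "s a (comb c) = comb (\<lambda>i. a * c i)" for a c
    unfolding comb_def s_sum_right s_assoc ..
  show ?thesis unfolding submod_def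
  proof (intro conjI ballI allI)
    show "0 \<in> {comb c | c. True}" using z by blast
  next
    fix x y assume "x \<in> {comb c | c. True}" "y \<in> {comb c | c. True}"
    then obtain c c' where "x = comb c" "y = comb c'" by blast
    then show "x + y \<in> {comb c | c. True}" using p by blast
  next
    fix a x assume "x \<in> {comb c | c. True}"
    then obtain c where "x = comb c" by blast
    then show "s a x \<in> {comb c | c. True}" using q by blast
  qed
qed

lemma comb_sharp: "comb c \<in> sharp C"
  unfolding comb_def by (intro submod_sum[OF sharp_submod] submod_s[OF sharp_submod] m_sharp) simp

lemma spanning: assumes "z \<in> sharp C" shows "\<exists>\<phi> c. \<phi> \<in> flat C \<and> z = \<phi> + comb c"
proof -
  have "S \<subseteq> {comb c | c. True}"
  proof
    fix x assume "x \<in> S"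
    then obtain k where "k < n" "x = m k" using mbij unfolding bij_betw_def by auto
    then have "x = comb (\<lambda>i. if i = k then 1 else 0)" using comb_delta by simp
    then show "x \<in> {comb c | c. True}" by blast
  qed
  then have "rspan s S \<subseteq> {comb c | c. True}" using rspan_least[OF Lin_submod] by blast
  then have "sharp C \<subseteq> set_plus (flat C) {comb c | c. True}" using Sspan set_plus_mono by blast
  then show ?thesis using assms unfolding set_plus_def by blast
qed

lemma key: assumes "comb c \<in> flat C" "k < n" shows "c k \<in> max_ideal"
proof (rule ccontr)
  assume "c k \<notin> max_ideal"
  then obtain u where u: "u * c k = 1" using notJ by (metis dvdE mult.commute)
  define S' where "S' = S - {m k}"
  define Q where "Q = set_plus (flat C) (rspan s S')"
  have Qs: "submod s Q" unfolding Q_def using submod_plus flat_submod rspan_submod by blast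
  have fQ: "flat C \<subseteq> Q" unfolding Q_def using set_plus_left rspan_submod by blast
  have rQ: "rspan s S' \<subseteq> Q" unfolding Q_def using set_plus_right flat_submod by blast
  have mi: "m i \<in> Q" if "i < n" "i \<noteq> k" for i
  proof -
    have "m i \<in> S'" unfolding S'_def using that m_inj assms(2) mbij unfolding bij_betw_def by auto
    then show ?thesis using rQ rspan_base by blast
  qed
  have "s u (comb c) = (\<Sum>i<n. s (u * c i) (m i))" unfolding comb_def s_sum_right s_assoc ..
  also have "\<dots> = s (u * c k) (m k) + (\<Sum>i\<in>{..<n} - {k}. s (u * c i) (m i))"
    using assms(2) by (subst sum.remove[of _ k]) auto
  finally have "m k = s u (comb c) - (\<Sum>i\<in>{..<n} - {k}. s (u * c i) (m i))"
    using u by simp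
  moreover have "s u (comb c) \<in> Q" using assms(1) fQ Qs submod_s by blast
  moreover have "(\<Sum>i\<in>{..<n} - {k}. s (u * c i) (m i)) \<in> Q"
    by (intro submod_sum[OF Qs] submod_s[OF Qs] mi) auto
  ultimately have "m k \<in> Q" using Qs submod_diff by metis
  then have "S \<subseteq> Q" using mi mbij unfolding bij_betw_def by auto
  then have "rspan s S \<subseteq> Q" using rspan_least Qs by blast
  then have "sharp C \<subseteq> Q" using Sspan set_plus_least[OF Qs fQ] by blast
  moreover have "finite S'" "S' \<subseteq> sharp C" unfolding S'_def using finS Ssh by auto
  ultimately have "card S \<le> card S'" using Smin unfolding Q_def by blast
  moreover have "m k \<in> S" using mbij assms(2) unfolding bij_betw_def by auto
  then have "card S' < card S" proof -
    have "S \<noteq> {}" using \<open>m k \<in> S\<close> by blast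
    then have "card S > 0" using finS card_gt_0_iff by blast
    then show ?thesis unfolding S'_def using finS \<open>m k \<in> S\<close> by simp
  qed
  ultimately show False by simp
qed

lemma comb_J: assumes "\<And>i. i < n \<Longrightarrow> c i \<in> max_ideal" shows "comb c \<in> flat C"
  unfolding comb_def by (intro submod_sum[OF flat_submod] JC assms m_sharp) auto

end

lemma prod_congJ:
  assumes loc: "local_ring TYPE('r::comm_ring_1)" and fin: "finite I"
    and ab: "\<And>i. i \<in> I \<Longrightarrow> (a i::'r) - b i \<in> max_ideal"
  shows "prod a I - prod b I \<in> max_ideal"
  using fin ab
proof (induction I rule: finite_induct)
  case empty then show ?case using J_0 by simp
next
  case (insert x F)
  have "prod a (insert x F) - prod b (insert x F) = a x * (prod a F - prod b F) + (a x - b x) * prod b F"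
    using insert by (simp add: algebra_simps)
  moreover have "a x * (prod a F - prod b F) \<in> max_ideal" using insert J_mult by blast
  moreover have "(a x - b x) * prod b F \<in> max_ideal" using insert J_mult2 by blast
  ultimately show ?case using J_add[OF loc] by simp
qed

lemma det_congJ:
  assumes loc: "local_ring TYPE('r::comm_ring_1)"
    and A: "A \<in> carrier_mat n n" and B: "B \<in> carrier_mat n n"
    and ab: "\<And>i j. i < n \<Longrightarrow> j < n \<Longrightarrow> (A $$ (i,j) :: 'r) - B $$ (i,j) \<in> max_ideal"
  shows "det A - det B \<in> max_ideal"
proof -
  have "det A - det B = (\<Sum>p \<in> {p. p permutes {0..<n}}. signof p * ((\<Prod>i = 0..<n. A $$ (i, p i)) - (\<Prod>i = 0..<n. B $$ (i, p i))))"
    unfolding det_def'[OF A] det_def'[OF B] sum_subtractf[symmetric] by (simp add: algebra_simps)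
  also have "\<dots> \<in> max_ideal"
  proof (rule J_sum[OF loc])
    fix p assume "p \<in> {p. p permutes {0..<n}}"
    then have p: "p permutes {0..<n}" by simp
    have "(\<Prod>i = 0..<n. A $$ (i, p i)) - (\<Prod>i = 0..<n. B $$ (i, p i)) \<in> max_ideal"
    proof (rule prod_congJ[OF loc])
      fix i assume "i \<in> {0..<n}"
      then have "i < n" "p i < n" using p permutes_in_image by auto
      then show "A $$ (i, p i) - B $$ (i, p i) \<in> max_ideal" using ab by blast
    qed simp
    then show "signof p * ((\<Prod>i = 0..<n. A $$ (i, p i)) - (\<Prod>i = 0..<n. B $$ (i, p i))) \<in> max_ideal"
      using J_mult by blast
  qed
  finally show ?thesis .
qed

lemma inv_exists:
  fixes d e :: "nat \<Rightarrow> nat \<Rightarrow> 'r::comm_ring_1"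
  assumes loc: "local_ring TYPE('r)"
    and J: "\<And>i j. i < n \<Longrightarrow> j < n \<Longrightarrow> (if i = j then 1 else 0) - (\<Sum>k<n. e i k * d k j) \<in> max_ideal"
  shows "\<exists>di. (\<forall>i<n. \<forall>j<n. (\<Sum>k<n. d i k * di k j) = (if i = j then 1 else 0))
             \<and> (\<forall>i<n. \<forall>j<n. (\<Sum>k<n. di i k * d k j) = (if i = j then 1 else 0))"
proof -
  define D where "D = mat n n (\<lambda>(i,j). d i j)"
  define E where "E = mat n n (\<lambda>(i,j). e i j)"
  have D: "D \<in> carrier_mat n n" and E: "E \<in> carrier_mat n n" unfolding D_def E_def by auto
  have ED: "(E * D) $$ (i,j) = (\<Sum>k<n. e i k * d k j)" if "i < n" "j < n" for i j
    using that unfolding D_def E_def by (auto simp: scalar_prod_def lessThan_atLeast0 intro: sum.cong)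
  have "det (1\<^sub>m n) - det (E * D) \<in> max_ideal"
    by (rule det_congJ[OF loc]) (use D E ED J in auto)
  then have "1 - det (E * D) \<in> max_ideal" by simp
  from J_unit[OF loc this] have "det (E * D) dvd (1::'r)" by simp
  then have "(det E * det D) dvd 1" using det_mult[OF E D] by simp
  then have "det D dvd 1" using dvd_mult_right by blast
  then obtain u where u: "u * det D = 1" by (metis dvdE mult.commute)
  define di where "di i j = u * adj_mat D $$ (i,j)" for i j
  have adj: "adj_mat D \<in> carrier_mat n n" "D * adj_mat D = det D \<cdot>\<^sub>m 1\<^sub>m n" "adj_mat D * D = det D \<cdot>\<^sub>m 1\<^sub>m n"
    using adj_mat[OF D] by auto
  have 1: "(\<Sum>k<n. d i k * di k j) = (if i = j then 1 else 0)" if "i < n" "j < n" for i j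
  proof -
    have "(D * adj_mat D) $$ (i,j) = (\<Sum>k<n. d i k * adj_mat D $$ (k,j))"
      using that adj(1) unfolding D_def by (auto simp: scalar_prod_def lessThan_atLeast0 intro: sum.cong)
    moreover have "(D * adj_mat D) $$ (i,j) = det D * (if i = j then 1 else 0)"
      using that unfolding adj(2) by auto
    ultimately have "(\<Sum>k<n. d i k * adj_mat D $$ (k,j)) = det D * (if i = j then 1 else 0)" by simp
    then have "u * (\<Sum>k<n. d i k * adj_mat D $$ (k,j)) = (if i = j then 1 else 0)"
      using u by (simp add: mult.assoc[symmetric])
    then show ?thesis unfolding di_def sum_distrib_left by (simp add: ac_simps)
  qed
  have 2: "(\<Sum>k<n. di i k * d k j) = (if i = j then 1 else 0)" if "i < n" "j < n" for i j
  proof -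
    have "(adj_mat D * D) $$ (i,j) = (\<Sum>k<n. adj_mat D $$ (i,k) * d k j)"
      using that adj(1) unfolding D_def by (auto simp: scalar_prod_def lessThan_atLeast0 intro: sum.cong)
    moreover have "(adj_mat D * D) $$ (i,j) = det D * (if i = j then 1 else 0)"
      using that adj(1) unfolding adj(3) by auto
    ultimately have "(\<Sum>k<n. adj_mat D $$ (i,k) * d k j) = det D * (if i = j then 1 else 0)" by simp
    then have "u * (\<Sum>k<n. adj_mat D $$ (i,k) * d k j) = (if i = j then 1 else 0)"
      using u by (simp add: mult.assoc[symmetric])
    then show ?thesis unfolding di_def sum_distrib_left by (simp add: ac_simps)
  qed
  show ?thesis using 1 2 by blast
qed

context lr begin

definition mv :: "nat \<Rightarrow> (nat \<Rightarrow> nat \<Rightarrow> 'r) \<Rightarrow> (nat \<Rightarrow> 'm) \<Rightarrow> (nat \<Rightarrow> 'm)" where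
  "mv n a v = (\<lambda>i. \<Sum>j<n. s (a i j) (v j))"

lemma mv_comp: "mv n a (mv n b v) i = (\<Sum>j<n. s (\<Sum>k<n. a i k * b k j) (v j))"
proof -
  have "mv n a (mv n b v) i = (\<Sum>k<n. \<Sum>j<n. s (a i k * b k j) (v j))"
    unfolding mv_def s_sum_right s_assoc ..
  also have "\<dots> = (\<Sum>j<n. \<Sum>k<n. s (a i k * b k j) (v j))" by (rule sum.swap)
  also have "\<dots> = (\<Sum>j<n. s (\<Sum>k<n. a i k * b k j) (v j))" unfolding s_sum_left ..
  finally show ?thesis .
qed

lemma mv_inv:
  assumes "\<And>i j. i < n \<Longrightarrow> j < n \<Longrightarrow> (\<Sum>k<n. a i k * b k j) = (if i = j then 1 else 0)" "i < n"
  shows "mv n a (mv n b v) i = v i"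
proof -
  have "mv n a (mv n b v) i = (\<Sum>j<n. s (if i = j then 1 else 0) (v j))"
    unfolding mv_comp using assms by (intro sum.cong) auto
  also have "\<dots> = (\<Sum>j<n. if i = j then v j else 0)" by (intro sum.cong) auto
  also have "\<dots> = v i" using assms(2) by (simp add: sum.delta)
  finally show ?thesis .
qed

lemma mv_add: "mv n a (\<lambda>j. v j + w j) i = mv n a v i + mv n a w i"
  unfolding mv_def s_add_right sum.distrib ..

lemma mv_neg: "mv n a (\<lambda>j. - v j) i = - mv n a v i"
  unfolding mv_def s_neg_right sum_negf ..

lemma mv_sumv: "mv n a (\<lambda>j. \<Sum>k\<in>K. V k j) i = (\<Sum>k\<in>K. mv n a (V k) i)"
  unfolding mv_def s_sum_right by (rule sum.swap)

lemma mv_zero: "mv n a (\<lambda>_. 0) = (\<lambda>_. 0)"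
  unfolding mv_def by simp

lemma funpow_zero: "(mv n a ^^ k) (\<lambda>_. 0) = (\<lambda>_. 0)"
  by (induction k) (auto simp: mv_zero)

lemma mv_rel: assumes "LR P" "\<And>j. j < n \<Longrightarrow> (v j, w j) \<in> P" shows "(mv n a v i, mv n a w i) \<in> P"
  unfolding mv_def by (intro lr_sum[OF assms(1)] lr_s[OF assms(1)] assms(2)) auto

lemma mv_sub: assumes "submod s Z" "\<And>j. j < n \<Longrightarrow> v j \<in> Z" shows "mv n a v i \<in> Z"
  unfolding mv_def by (intro submod_sum[OF assms(1)] submod_s[OF assms(1)] assms(2)) auto

lemma funpow_rel: assumes "LR P" "\<And>j. j < n \<Longrightarrow> (v j, w j) \<in> P"
  shows "i < n \<Longrightarrow> ((mv n a ^^ k) v i, (mv n a ^^ k) w i) \<in> P"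
proof (induction k arbitrary: i)
  case 0 then show ?case using assms by simp
next
  case (Suc k) then show ?case using mv_rel[OF assms(1)] by simp
qed

lemma funpow_sub: assumes "submod s Z" "\<And>j. j < n \<Longrightarrow> v j \<in> Z"
  shows "i < n \<Longrightarrow> (mv n a ^^ k) v i \<in> Z"
proof (induction k arbitrary: i)
  case 0 then show ?case using assms by simp
next
  case (Suc k) then show ?case using mv_sub[OF assms(1)] by simp
qed

lemma inter_submod': "submod s A \<Longrightarrow> submod s B \<Longrightarrow> submod s (A \<inter> B)"
  unfolding submod_def by blast

lemma fwd_solve:
  assumes P: "LR P"
    and inv: "\<And>i j. i < n \<Longrightarrow> j < n \<Longrightarrow> (\<Sum>k<n. d i k * di k j) = (if i = j then 1 else 0)"
    and f: "\<And>i. i < n \<Longrightarrow> f i \<in> sprime P \<and> f i \<in> dprime (rel_inv P)"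
  shows "\<exists>g. \<forall>i<n. (g i, mv n d g i - f i) \<in> P \<and> g i \<in> sprime P \<and> g i \<in> dprime (rel_inv P)"
proof -
  define Z where "Z = sprime P \<inter> dprime (rel_inv P)"
  have Zs: "submod s Z" unfolding Z_def
    using inter_submod' s_submod[OF P] d_submod[OF lr_inv[OF P]] by blast
  have "\<forall>i\<in>{..<n}. \<exists>c N. c 0 = f i \<and> (\<forall>k. (c k, c (Suc k)) \<in> P) \<and> (\<forall>k\<ge>N. c k = 0)
     \<and> (\<forall>k. c k \<in> Z)"
  proof
    fix i assume "i \<in> {..<n}"
    then have "f i \<in> sprime P" "f i \<in> dprime (rel_inv P)" using f by auto
    from s_chain[OF this] show "\<exists>c N. c 0 = f i \<and> (\<forall>k. (c k, c (Suc k)) \<in> P) \<and> (\<forall>k\<ge>N. c k = 0)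
     \<and> (\<forall>k. c k \<in> Z)" unfolding Z_def by blast
  qed
  from bchoice[OF this] obtain c where "\<forall>i\<in>{..<n}. \<exists>N. c i 0 = f i \<and> (\<forall>k. (c i k, c i (Suc k)) \<in> P) \<and> (\<forall>k\<ge>N. c i k = 0)
     \<and> (\<forall>k. c i k \<in> Z)" by blast
  from bchoice[OF this] obtain NN where cN: "\<forall>i\<in>{..<n}. c i 0 = f i \<and> (\<forall>k. (c i k, c i (Suc k)) \<in> P) \<and> (\<forall>k\<ge>NN i. c i k = 0)
     \<and> (\<forall>k. c i k \<in> Z)" by blast
  then have c: "\<And>i. i < n \<Longrightarrow> c i 0 = f i" "\<And>i k. i < n \<Longrightarrow> (c i k, c i (Suc k)) \<in> P"
    "\<And>i k. i < n \<Longrightarrow> k \<ge> NN i \<Longrightarrow> c i k = 0" "\<And>i k. i < n \<Longrightarrow> c i k \<in> Z"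
    by auto
  define N where "N = (\<Sum>i<n. NN i)"
  have NN: "NN i \<le> N" if "i < n" for i unfolding N_def using that
    by (intro member_le_sum) auto
  define V where "V k = (\<lambda>i. if i < n then c i k else 0)" for k
  define F where "F = mv n di"
  define W where "W k = (F ^^ Suc k) (V k)" for k
  define g where "g = (\<lambda>i. \<Sum>k<Suc N. W k i)"
  have VZ: "V k j \<in> Z" if "j < n" for k j unfolding V_def using that c(4) by simp
  have VP: "(V k j, V (Suc k) j) \<in> P" if "j < n" for k j unfolding V_def using that c(2) by simp
  have V0: "V (Suc N) = (\<lambda>_. 0)" unfolding V_def using c(3) NN by fastforce
  have dW: "mv n d (W k) i = (F ^^ k) (V k) i" if "i < n" for k i
    unfolding W_def F_def funpow.simps(2) o_def using mv_inv[OF inv that] .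
  show ?thesis
  proof (intro exI allI impI conjI)
    fix i assume i: "i < n"
    have "mv n d g i = (\<Sum>k<Suc N. mv n d (W k) i)" unfolding g_def mv_sumv ..
    also have "\<dots> = (\<Sum>k<Suc N. (F ^^ k) (V k) i)" using dW i by simp
    also have "\<dots> = f i + (\<Sum>k<N. (F ^^ Suc k) (V (Suc k)) i)"
      unfolding sum.lessThan_Suc_shift using i c(1) by (simp add: V_def)
    finally have e1: "mv n d g i - f i = (\<Sum>k<N. (F ^^ Suc k) (V (Suc k)) i)" by simp
    have "(\<Sum>k<Suc N. (F ^^ Suc k) (V (Suc k)) i) = (\<Sum>k<N. (F ^^ Suc k) (V (Suc k)) i)"
      using V0 unfolding F_def by (simp add: funpow_zero del: funpow.simps)
    moreover have "(g i, \<Sum>k<Suc N. (F ^^ Suc k) (V (Suc k)) i) \<in> P"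
      unfolding g_def W_def F_def
      by (intro lr_sum[OF P] funpow_rel[OF P] VP i) auto
    ultimately show "(g i, mv n d g i - f i) \<in> P" using e1 by simp
    have "g i \<in> Z" unfolding g_def W_def F_def
      by (intro submod_sum[OF Zs] funpow_sub[OF Zs] VZ i) auto
    then show "g i \<in> sprime P" "g i \<in> dprime (rel_inv P)" unfolding Z_def by auto
  qed
qed

lemma bwd_solve:
  assumes P: "LR P"
    and inv1: "\<And>i j. i < n \<Longrightarrow> j < n \<Longrightarrow> (\<Sum>k<n. d i k * di k j) = (if i = j then 1 else 0)"
    and inv2: "\<And>i j. i < n \<Longrightarrow> j < n \<Longrightarrow> (\<Sum>k<n. di i k * d k j) = (if i = j then 1 else 0)"
    and f: "\<And>i. i < n \<Longrightarrow> f i \<in> sprime (rel_inv P) \<and> f i \<in> dprime P"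
  shows "\<exists>g. \<forall>i<n. (g i, mv n d g i - f i) \<in> P \<and> g i \<in> sprime (rel_inv P) \<and> g i \<in> dprime P"
proof -
  define Z where "Z = sprime (rel_inv P) \<inter> dprime P"
  have Zs: "submod s Z" unfolding Z_def
    using inter_submod' s_submod[OF lr_inv[OF P]] d_submod[OF P] by blast
  define f' where "f' = (\<lambda>i. - mv n di f i)"
  have f'Z: "f' i \<in> Z" for i unfolding f'_def
    by (intro submod_neg[OF Zs] mv_sub[OF Zs]) (use f in \<open>auto simp: Z_def\<close>)
  obtain g' where g': "\<And>i. i < n \<Longrightarrow> (g' i, mv n di g' i - f' i) \<in> rel_inv P \<and> g' i \<in> sprime (rel_inv P)
      \<and> g' i \<in> dprime (rel_inv (rel_inv P))"
    using fwd_solve[OF lr_inv[OF P] inv2, of f'] f'Z unfolding Z_def by auto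
  define g where "g = mv n di (\<lambda>j. g' j + f j)"
  show ?thesis
  proof (intro exI allI impI conjI)
    fix i assume i: "i < n"
    have "mv n d g i = g' i + f i" unfolding g_def using mv_inv[OF inv1 i] .
    moreover have "g i = mv n di g' i - f' i" unfolding g_def f'_def mv_add by simp
    ultimately show "(g i, mv n d g i - f i) \<in> P" using g'[OF i] by simp
    have "g i \<in> Z" unfolding g_def
      by (intro mv_sub[OF Zs] submod_add[OF Zs]) (use g' f in \<open>auto simp: Z_def\<close>)
    then show "g i \<in> sprime (rel_inv P)" "g i \<in> dprime P" unfolding Z_def by auto
  qed
qed

end

lemma fun_sum_apply: "(sum f I) x = (\<Sum>i\<in>I. f i x)"
  by (induction I rule: infinite_finite_induct) auto

lemma fscale_apply[simp]: "fscale c f j = c * f j" unfolding fscale_def by simp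

lemma fscale_module: "is_module (fscale :: 'r::comm_ring_1 \<Rightarrow> (nat \<Rightarrow> 'r) \<Rightarrow> _)"
  unfolding is_module_def fscale_def by (auto simp: algebra_simps fun_eq_iff)

interpretation FS: lr "fscale :: 'r::comm_ring_1 \<Rightarrow> (nat \<Rightarrow> 'r) \<Rightarrow> _"
  by unfold_locales (rule fscale_module)

definition Xn :: "nat \<Rightarrow> (nat \<Rightarrow> 'r::comm_ring_1) set" where "Xn n = {x. \<forall>i\<ge>n. x i = 0}"
definition ev :: "nat \<Rightarrow> nat \<Rightarrow> 'r::comm_ring_1" where "ev k = (\<lambda>j. if j = k then 1 else 0)"

lemma X_submod: "submod fscale (Xn n :: (nat \<Rightarrow> 'r::comm_ring_1) set)"
  unfolding submod_def Xn_def by auto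

lemma ev_X: "k < n \<Longrightarrow> ev k \<in> Xn n" unfolding ev_def Xn_def by auto

lemma X_expand: assumes "x \<in> Xn n" shows "x = (\<Sum>k<n. fscale (x k) (ev k))"
proof
  fix j
  have "(\<Sum>k<n. fscale (x k) (ev k)) j = (\<Sum>k<n. if k = j then x j else 0)"
    unfolding fun_sum_apply by (intro sum.cong) (auto simp: ev_def)
  also have "\<dots> = x j" using assms unfolding Xn_def by (auto simp: sum.delta')
  finally show "x j = (\<Sum>k<n. fscale (x k) (ev k)) j" by simp
qed

lemma ev_inj: "ev k = (ev k' :: nat \<Rightarrow> 'r::comm_ring_1) \<longleftrightarrow> k = k'"
  unfolding ev_def by (metis zero_neq_one)

lemma X_free: "free_mod (Xn n :: (nat \<Rightarrow> 'r::comm_ring_1) set)"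
  unfolding free_mod_def
proof (intro exI[of _ "ev ` {..<n}"] conjI)
  show "ev ` {..<n} \<subseteq> (Xn n :: (nat \<Rightarrow> 'r) set)" using ev_X by auto
  show "\<not> rdependent fscale (ev ` {..<n} :: (nat \<Rightarrow> 'r) set)"
  proof
    assume "rdependent fscale (ev ` {..<n} :: (nat \<Rightarrow> 'r) set)"
    then obtain t u v0 where t: "finite t" "t \<subseteq> ev ` {..<n}" "(\<Sum>v\<in>t. fscale (u v) v) = (0 :: nat \<Rightarrow> 'r)"
      "v0 \<in> t" "u v0 \<noteq> 0"
      unfolding rdependent_def by blast
    obtain k where k: "v0 = ev k" using t by auto
    have "0 = (\<Sum>v\<in>t. fscale (u v) v) k" using t by simp
    also have "\<dots> = (\<Sum>v\<in>t. if v = v0 then u v else 0)"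
      unfolding fun_sum_apply
    proof (intro sum.cong refl)
      fix v assume "v \<in> t"
      then obtain k' where vk: "v = ev k'" using t by auto
      have e: "(v = v0) = (k' = k)" using ev_inj[of k' k] k vk by simp
      have "v k = (if k' = k then 1 else 0)" using vk by (simp add: ev_def)
      then show "fscale (u v) v k = (if v = v0 then u v else 0)" using e by simp
    qed
    also have "\<dots> = u v0" using t by (simp add: sum.delta')
    finally show False using t by simp
  qed
  show "rspan fscale (ev ` {..<n}) = (Xn n :: (nat \<Rightarrow> 'r) set)"
  proof
    show "rspan fscale (ev ` {..<n}) \<subseteq> (Xn n :: (nat \<Rightarrow> 'r) set)"
      by (rule FS.rspan_least[OF X_submod]) (use ev_X in auto)
    show "(Xn n :: (nat \<Rightarrow> 'r) set) \<subseteq> rspan fscale (ev ` {..<n})"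
    proof
      fix x :: "nat \<Rightarrow> 'r" assume "x \<in> Xn n"
      then have "x = (\<Sum>k<n. fscale (x k) (ev k))" by (rule X_expand)
      also have "\<dots> \<in> rspan fscale (ev ` {..<n})"
        by (intro FS.submod_sum[OF FS.rspan_submod] FS.submod_s[OF FS.rspan_submod])
          (auto intro!: subsetD[OF FS.rspan_base])
      finally show "x \<in> rspan fscale (ev ` {..<n})" .
    qed
  qed
qed

lemma X_rad:
  assumes loc: "local_ring TYPE('r::comm_ring_1)"
  shows "rad (Xn n :: (nat \<Rightarrow> 'r) set) = {x \<in> Xn n. \<forall>i<n. x i \<in> max_ideal}"
proof
  show "rad (Xn n :: (nat \<Rightarrow> 'r) set) \<subseteq> {x \<in> Xn n. \<forall>i<n. x i \<in> max_ideal}"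
  proof
    fix x :: "nat \<Rightarrow> 'r" assume xr: "x \<in> rad (Xn n)"
    then have xX: "x \<in> Xn n" unfolding rad_def by blast
    have "x k \<in> max_ideal" if k: "k < n" for k
    proof (rule ccontr)
      assume xk: "x k \<notin> max_ideal"
      define N where "N = {y \<in> (Xn n :: (nat \<Rightarrow> 'r) set). y k \<in> max_ideal}"
      have Ns: "submod fscale N" unfolding submod_def
      proof (intro conjI ballI allI)
        show "0 \<in> N" unfolding N_def using J_0 X_submod[unfolded submod_def] by auto
      next
        fix a b :: "nat \<Rightarrow> 'r" assume "a \<in> N" "b \<in> N"
        then show "a + b \<in> N" unfolding N_def using J_add[OF loc, of "a k" "b k"] by (auto simp: Xn_def)
      next
        fix c :: 'r and a :: "nat \<Rightarrow> 'r" assume "a \<in> N"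
        then show "fscale c a \<in> N" unfolding N_def using J_mult[of "a k" c] by (auto simp: Xn_def)
      qed
      have "maximal_submod (Xn n) N" unfolding maximal_submod_def
      proof (intro conjI allI impI)
        show "submod fscale N" by (rule Ns)
        show "N \<subseteq> Xn n" unfolding N_def by auto
        show "N \<noteq> Xn n"
        proof
          assume "N = Xn n"
          then have "ev k \<in> N" using ev_X[OF k] by simp
          then have "(1::'r) \<in> max_ideal" unfolding N_def by (simp add: ev_def)
          then show False using one_notJ by blast
        qed
        fix N' assume N': "submod fscale N' \<and> N \<subseteq> N' \<and> N' \<subseteq> Xn n"
        show "N' = N \<or> N' = Xn n"
        proof (cases "N' \<subseteq> N")
          case True then show ?thesis using N' by blast
        next
          case False
          then obtain y where y: "y \<in> N'" "y \<notin> N" by blast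
          then have yX: "y \<in> Xn n" and yk: "y k dvd 1" using N' notJ unfolding N_def by auto
          then obtain v where v: "v * y k = 1" by (metis dvdE mult.commute)
          have "z \<in> N'" if zX: "z \<in> Xn n" for z
          proof -
            have "z - fscale (z k * v) y \<in> N"
              unfolding N_def using zX yX v J_0 X_submod
              by (auto simp: Xn_def mult.assoc)
            then have "z - fscale (z k * v) y \<in> N'" using N' by blast
            moreover have "fscale (z k * v) y \<in> N'" using N' y FS.submod_s by blast
            ultimately have "(z - fscale (z k * v) y) + fscale (z k * v) y \<in> N'"
              using N' FS.submod_add by blast
            then show ?thesis by simp
          qed
          then show ?thesis using N' by blast
        qed
      qed
      then have "x \<in> N" using xr unfolding rad_def by blast
      then show False using xk unfolding N_def by blast
    qed
    then show "x \<in> {x \<in> Xn n. \<forall>i<n. x i \<in> max_ideal}" using xX by blast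
  qed
  show "{x \<in> Xn n. \<forall>i<n. x i \<in> max_ideal} \<subseteq> rad (Xn n :: (nat \<Rightarrow> 'r) set)"
  proof
    fix x :: "nat \<Rightarrow> 'r" assume x: "x \<in> {x \<in> Xn n. \<forall>i<n. x i \<in> max_ideal}"
    have "x \<in> N" if N: "maximal_submod (Xn n) N" for N
    proof (rule ccontr)
      assume xN: "x \<notin> N"
      have Ns: "submod fscale N" "N \<subseteq> Xn n" using N unfolding maximal_submod_def by auto
      define N' where "N' = {y + fscale c x | y c. y \<in> N}"
      have N's: "submod fscale N'" unfolding submod_def
      proof (intro conjI ballI allI)
        show "0 \<in> N'" unfolding N'_def using FS.submod_0[OF Ns(1)]
          by (intro CollectI exI[of _ 0] exI[of _ "0::'r"]) (auto simp: fscale_def fun_eq_iff)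
      next
        fix a b assume "a \<in> N'" "b \<in> N'"
        then obtain y c y' c' where "a = y + fscale c x" "b = y' + fscale c' x" "y \<in> N" "y' \<in> N"
          unfolding N'_def by blast
        then show "a + b \<in> N'" unfolding N'_def using FS.submod_add[OF Ns(1)]
          by (intro CollectI exI[of _ "y + y'"] exI[of _ "c + c'"]) (auto simp: fscale_def fun_eq_iff algebra_simps)
      next
        fix c0 a assume "a \<in> N'"
        then obtain y c where "a = y + fscale c x" "y \<in> N" unfolding N'_def by blast
        then show "fscale c0 a \<in> N'" unfolding N'_def using FS.submod_s[OF Ns(1)]
          by (intro CollectI exI[of _ "fscale c0 y"] exI[of _ "c0 * c"]) (auto simp: fscale_def fun_eq_iff algebra_simps)
      qed
      have NN': "N \<subseteq> N'" unfolding N'_def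
        by (auto intro!: exI[of _ "0::'r"] simp: fscale_def fun_eq_iff)
      have "N' \<subseteq> Xn n" unfolding N'_def using Ns x by (auto simp: Xn_def)
      moreover have "x \<in> N'" unfolding N'_def using FS.submod_0[OF Ns(1)]
        by (auto intro!: exI[of _ "0::nat\<Rightarrow>'r"] exI[of _ "1::'r"] simp: fscale_def fun_eq_iff)
      ultimately have "N' = Xn n" using N N's NN' xN unfolding maximal_submod_def by blast
      then have "\<forall>k<n. \<exists>y c. y \<in> N \<and> ev k = y + fscale c x" using ev_X unfolding N'_def by blast
      then obtain y c where yc: "\<And>k. k < n \<Longrightarrow> y k \<in> N \<and> ev k = y k + fscale (c k) x"
        by metis
      have xX: "x \<in> Xn n" using x by blast
      have "x = (\<Sum>k<n. fscale (x k) (ev k))" using X_expand[OF xX] .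
      also have "\<dots> = (\<Sum>k<n. fscale (x k) (y k + fscale (c k) x))"
        by (rule sum.cong) (use yc in auto)
      also have "\<dots> = (\<Sum>k<n. fscale (x k) (y k)) + (\<Sum>k<n. fscale (x k * c k) x)"
        unfolding FS.s_add_right FS.s_assoc sum.distrib ..
      also have "\<dots> = (\<Sum>k<n. fscale (x k) (y k)) + fscale (\<Sum>k<n. x k * c k) x"
        unfolding FS.s_sum_left ..
      finally have e: "x = (\<Sum>k<n. fscale (x k) (y k)) + fscale (\<Sum>k<n. x k * c k) x" .
      define j where "j = (\<Sum>k<n. x k * c k)"
      have jJ: "j \<in> max_ideal" unfolding j_def using x by (intro J_sum[OF loc] J_mult2) auto
      obtain w where w: "w * (1 - j) = 1" using J_unit[OF loc jJ] by (metis dvdE mult.commute)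
      have "fscale (1 - j) x = (\<Sum>k<n. fscale (x k) (y k))"
        using e unfolding j_def[symmetric] by (simp add: fun_eq_iff algebra_simps)
      moreover have "(\<Sum>k<n. fscale (x k) (y k)) \<in> N"
        by (intro FS.submod_sum[OF Ns(1)] FS.submod_s[OF Ns(1)]) (use yc in auto)
      ultimately have "fscale w (fscale (1 - j) x) \<in> N" using FS.submod_s[OF Ns(1)] by simp
      then have "x \<in> N" using w by (simp add: fscale_def mult.assoc[symmetric])
      then show False using xN by blast
    qed
    then show "x \<in> rad (Xn n)" unfolding rad_def using x by blast
  qed
qed

definition Tm :: "nat \<Rightarrow> (nat \<Rightarrow> nat \<Rightarrow> 'r::comm_ring_1) \<Rightarrow> (nat \<Rightarrow> 'r) \<Rightarrow> (nat \<Rightarrow> 'r)" where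
  "Tm n d x = (\<lambda>j. if j < n then \<Sum>i<n. x i * d i j else 0)"

lemma Tm_X: "Tm n d x \<in> Xn n" unfolding Tm_def Xn_def by auto

lemma Tm_lin: "lin_on fscale fscale (Xn n) (Tm n d)"
  unfolding lin_on_def Tm_def
  by (auto simp: fun_eq_iff algebra_simps sum.distrib sum_distrib_left)

lemma Tm_inv:
  assumes inv: "\<And>i j. i < n \<Longrightarrow> j < n \<Longrightarrow> (\<Sum>k<n. d i k * di k j) = (if i = j then 1 else 0)"
    and x: "x \<in> Xn n"
  shows "Tm n di (Tm n d x) = x"
proof
  fix j
  show "Tm n di (Tm n d x) j = x j"
  proof (cases "j < n")
    case True
    have "Tm n di (Tm n d x) j = (\<Sum>i<n. (\<Sum>k<n. x k * d k i) * di i j)"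
      unfolding Tm_def using True by (auto intro: sum.cong)
    also have "\<dots> = (\<Sum>i<n. \<Sum>k<n. x k * d k i * di i j)"
      unfolding sum_distrib_right ..
    also have "\<dots> = (\<Sum>k<n. \<Sum>i<n. x k * d k i * di i j)"
      by (rule sum.swap)
    also have "\<dots> = (\<Sum>k<n. x k * (\<Sum>i<n. d k i * di i j))"
      unfolding sum_distrib_left mult.assoc ..
    also have "\<dots> = (\<Sum>k<n. if k = j then x k else 0)"
      using inv True by (intro sum.cong) auto
    also have "\<dots> = x j" using True by simp
    finally show ?thesis .
  next
    case False then show ?thesis using x unfolding Tm_def Xn_def by auto
  qed
qed

lemma Tm_RT:
  assumes inv1: "\<And>i j. i < n \<Longrightarrow> j < n \<Longrightarrow> (\<Sum>k<n. d i k * di k j) = (if i = j then 1 else 0)"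
    and inv2: "\<And>i j. i < n \<Longrightarrow> j < n \<Longrightarrow> (\<Sum>k<n. di i k * d k j) = (if i = j then 1 else 0)"
  shows "RT_module (Xn n) (Tm n d)"
  unfolding RT_module_def
proof (intro conjI X_submod Tm_lin)
  show "bij_betw (Tm n d) (Xn n) (Xn n)"
    by (rule bij_betw_byWitness[where f' = "Tm n di"]) (use Tm_inv[OF inv1] Tm_inv[OF inv2] Tm_X in auto)
qed

context bas begin

definition gsum where "gsum g x = (\<Sum>i<n. s (x i) (g i))"

theorem main: "\<exists>X T \<rho>. reduction s C X T \<rho> \<and> free_mod X \<and> meets_in_radical C X \<rho>"
proof -
  have "\<forall>i\<in>{..<n}. \<exists>f c. f \<in> flat C \<and> (m i, f + comb c) \<in> C"
  proof
    fix i assume "i \<in> {..<n}"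
    then obtain mp where "mp \<in> sharp C" "(m i, mp) \<in> C" using succ m_sharp by auto
    then show "\<exists>f c. f \<in> flat C \<and> (m i, f + comb c) \<in> C" using spanning by blast
  qed
  from bchoice[OF this] obtain f where "\<forall>i\<in>{..<n}. \<exists>c. f i \<in> flat C \<and> (m i, f i + comb c) \<in> C" by blast
  from bchoice[OF this] obtain d where fd: "\<And>i. i < n \<Longrightarrow> f i \<in> flat C \<and> (m i, f i + comb (d i)) \<in> C" by blast
  have "\<forall>i\<in>{..<n}. \<exists>h c. h \<in> flat C \<and> (h + comb c, m i) \<in> C"
  proof
    fix i assume "i \<in> {..<n}"
    then obtain p where "p \<in> sharp C" "(p, m i) \<in> C" using pred m_sharp by auto
    then show "\<exists>h c. h \<in> flat C \<and> (h + comb c, m i) \<in> C" using spanning by blast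
  qed
  from bchoice[OF this] obtain h where "\<forall>i\<in>{..<n}. \<exists>c. h i \<in> flat C \<and> (h i + comb c, m i) \<in> C" by blast
  from bchoice[OF this] obtain e where he: "\<And>i. i < n \<Longrightarrow> h i \<in> flat C \<and> (h i + comb (e i), m i) \<in> C" by blast
  have mpsh: "f k + comb (d k) \<in> sharp C" if "k < n" for k
    using fd[OF that] flat_sub_sharp comb_sharp submod_add[OF sharp_submod] by blast
  have EDJ: "(if i = j then 1 else 0) - (\<Sum>k<n. e i k * d k j) \<in> max_ideal" if i: "i < n" and j: "j < n" for i j
  proof -
    define y where "y = (\<Sum>k<n. s (e i k) (f k + comb (d k)))"
    have "(comb (e i), y) \<in> C" unfolding comb_def[of "e i"] y_def
      by (intro lr_sum[OF lrC] lr_s[OF lrC]) (use fd in auto)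
    then have "(h i + comb (e i) - comb (e i), m i - y) \<in> C" using he[OF i] lr_diff[OF lrC] by blast
    then have "(h i, m i - y) \<in> C" by simp
    moreover have "m i - y \<in> sharp C" unfolding y_def
      by (intro submod_diff[OF sharp_submod] submod_sum[OF sharp_submod] submod_s[OF sharp_submod] m_sharp i mpsh) auto
    ultimately have my: "m i - y \<in> flat C" using flat_fwd he[OF i] by blast
    have "(\<Sum>k<n. s (e i k) (comb (d k))) = mv n e (mv n d m) i"
      unfolding mv_def comb_def ..
    also have "\<dots> = comb (\<lambda>j. \<Sum>k<n. e i k * d k j)" unfolding mv_comp comb_def ..
    finally have y: "y = (\<Sum>k<n. s (e i k) (f k)) + comb (\<lambda>j. \<Sum>k<n. e i k * d k j)"
      unfolding y_def s_add_right sum.distrib by simp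
    have "(\<lambda>j. if i = j then (1::'r) else 0) = (\<lambda>j. if j = i then 1 else 0)" by auto
    then have mi: "m i = comb (\<lambda>j. if i = j then 1 else 0)" using comb_delta[OF i] by simp
    have cd: "comb (\<lambda>j. a j - b j) = comb a - comb b" for a b
      unfolding comb_def s_diff_left sum_subtractf ..
    have "comb (\<lambda>j. (if i = j then 1 else 0) - (\<Sum>k<n. e i k * d k j)) = (m i - y) + (\<Sum>k<n. s (e i k) (f k))"
      unfolding cd mi[symmetric] y by simp
    also have "\<dots> \<in> flat C"
      by (intro submod_add[OF flat_submod] my submod_sum[OF flat_submod] submod_s[OF flat_submod]) (use fd in auto)
    finally show ?thesis using key j by blast
  qed
  obtain di where inv1: "\<And>i j. i < n \<Longrightarrow> j < n \<Longrightarrow> (\<Sum>k<n. d i k * di k j) = (if i = j then 1 else 0)"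
    and inv2: "\<And>i j. i < n \<Longrightarrow> j < n \<Longrightarrow> (\<Sum>k<n. di i k * d k j) = (if i = j then 1 else 0)"
    using inv_exists[OF loc EDJ] by blast
  have "\<forall>i\<in>{..<n}. \<exists>a b. f i = a + b \<and> a \<in> dprime C \<and> a \<in> sprime (rel_inv C) \<and> b \<in> dprime (rel_inv C) \<and> b \<in> sprime C"
    using fd unfolding flat_def set_plus_def by blast
  from bchoice[OF this] obtain a where "\<forall>i\<in>{..<n}. \<exists>b. f i = a i + b \<and> a i \<in> dprime C \<and> a i \<in> sprime (rel_inv C) \<and> b \<in> dprime (rel_inv C) \<and> b \<in> sprime C" by blast
  from bchoice[OF this] obtain b where ab: "\<And>i. i < n \<Longrightarrow> f i = a i + b i \<and> a i \<in> dprime C \<and> a i \<in> sprime (rel_inv C) \<and> b i \<in> dprime (rel_inv C) \<and> b i \<in> sprime C" by blast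
  obtain g1 where g1: "\<And>i. i < n \<Longrightarrow> (g1 i, mv n d g1 i - a i) \<in> C \<and> g1 i \<in> sprime (rel_inv C) \<and> g1 i \<in> dprime C"
    using bwd_solve[OF lrC inv1 inv2, of a] ab by blast
  obtain g2 where g2: "\<And>i. i < n \<Longrightarrow> (g2 i, mv n d g2 i - b i) \<in> C \<and> g2 i \<in> sprime C \<and> g2 i \<in> dprime (rel_inv C)"
    using fwd_solve[OF lrC inv1, of b] ab by blast
  define g where "g i = g1 i + g2 i" for i
  have gC: "(g i, mv n d g i - f i) \<in> C" if i: "i < n" for i
  proof -
    have "(g1 i + g2 i, (mv n d g1 i - a i) + (mv n d g2 i - b i)) \<in> C"
      using lr_add[OF lrC] g1[OF i] g2[OF i] by blast
    moreover have "mv n d g i = mv n d g1 i + mv n d g2 i" unfolding g_def[abs_def] mv_add ..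
    ultimately show ?thesis unfolding g_def using ab[OF i] by (simp add: algebra_simps)
  qed
  have gF: "g i \<in> flat C" if i: "i < n" for i
    unfolding g_def flat_def set_plus_def using g1[OF i] g2[OF i] by blast
  define nn where "nn i = m i + g i" for i
  have nnsh: "nn i \<in> sharp C" if "i < n" for i
    unfolding nn_def using m_sharp[OF that] gF[OF that] flat_sub_sharp submod_add[OF sharp_submod] by blast
  have nnC: "(nn i, \<Sum>j<n. s (d i j) (nn j)) \<in> C" if i: "i < n" for i
  proof -
    have "(\<Sum>j<n. s (d i j) (nn j)) = comb (d i) + mv n d g i"
      unfolding nn_def s_add_right sum.distrib comb_def mv_def ..
    also have "\<dots> = (f i + comb (d i)) + (mv n d g i - f i)" by simp
    finally have e: "(\<Sum>j<n. s (d i j) (nn j)) = (f i + comb (d i)) + (mv n d g i - f i)" .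
    have "(m i + g i, (f i + comb (d i)) + (mv n d g i - f i)) \<in> C"
      using lr_add[OF lrC] fd[OF i] gC[OF i] by blast
    then show ?thesis unfolding e nn_def[of i] .
  qed
  define \<rho> where "\<rho> x = (\<Sum>i<n. s (x i) (nn i))" for x :: "nat \<Rightarrow> 'r"
  have \<rho>split: "\<rho> x = comb x + (\<Sum>i<n. s (x i) (g i))" for x
    unfolding \<rho>_def nn_def comb_def s_add_right sum.distrib ..
  have gsF: "(\<Sum>i<n. s (x i) (g i)) \<in> flat C" for x
    by (intro submod_sum[OF flat_submod] submod_s[OF flat_submod] gF) auto
  have \<rho>sh: "\<rho> x \<in> sharp C" for x
    unfolding \<rho>_def by (intro submod_sum[OF sharp_submod] submod_s[OF sharp_submod] nnsh) auto
  have red: "reduction s C (Xn n) (Tm n d) \<rho>"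
    unfolding reduction_def
  proof (intro conjI Tm_RT[OF inv1 inv2])
    show "lin_on fscale s (Xn n) \<rho>"
      unfolding lin_on_def \<rho>_def
      by (simp add: s_add_left sum.distrib s_sum_right s_assoc)
    show "sharp C = set_plus (flat C) (\<rho> ` Xn n)"
    proof
      show "sharp C \<subseteq> set_plus (flat C) (\<rho> ` Xn n)"
      proof
        fix z assume "z \<in> sharp C"
        then obtain \<phi> c where \<phi>: "\<phi> \<in> flat C" "z = \<phi> + comb c" using spanning by blast
        define x where "x = (\<lambda>i. if i < n then c i else 0)"
        have xX: "x \<in> Xn n" unfolding x_def Xn_def by auto
        have "comb x = comb c" unfolding comb_def x_def by (intro sum.cong) auto
        then have "z = (\<phi> - (\<Sum>i<n. s (x i) (g i))) + \<rho> x" using \<phi> \<rho>split[of x] by simp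
        moreover have "\<phi> - (\<Sum>i<n. s (x i) (g i)) \<in> flat C"
          using submod_diff[OF flat_submod \<phi>(1) gsF] .
        ultimately show "z \<in> set_plus (flat C) (\<rho> ` Xn n)" unfolding set_plus_def using xX by blast
      qed
      show "set_plus (flat C) (\<rho> ` Xn n) \<subseteq> sharp C"
        by (rule set_plus_least[OF sharp_submod flat_sub_sharp]) (use \<rho>sh in auto)
    qed
    show "\<forall>x\<in>Xn n. \<rho> (Tm n d x) \<in> rel_app C (\<rho> x)"
    proof
      fix x :: "nat \<Rightarrow> 'r" assume "x \<in> Xn n"
      have "\<rho> (Tm n d x) = (\<Sum>j<n. s (\<Sum>i<n. x i * d i j) (nn j))"
        unfolding \<rho>_def Tm_def by (intro sum.cong) auto
      also have "\<dots> = (\<Sum>i<n. s (x i) (\<Sum>j<n. s (d i j) (nn j)))"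
        unfolding s_sum_left s_sum_right s_assoc by (rule sum.swap)
      finally have e: "\<rho> (Tm n d x) = (\<Sum>i<n. s (x i) (\<Sum>j<n. s (d i j) (nn j)))" .
      have "(\<rho> x, \<Sum>i<n. s (x i) (\<Sum>j<n. s (d i j) (nn j))) \<in> C"
        unfolding \<rho>_def by (intro lr_sum[OF lrC] lr_s[OF lrC] nnC) auto
      then show "\<rho> (Tm n d x) \<in> rel_app C (\<rho> x)" unfolding rel_app_def e by simp
    qed
  qed
  have mir: "meets_in_radical C (Xn n) \<rho>"
    unfolding meets_in_radical_def X_rad[OF loc]
  proof (intro Collect_cong conj_cong refl)
    fix x :: "nat \<Rightarrow> 'r"
    have "\<rho> x \<in> flat C \<longleftrightarrow> comb x \<in> flat C"
    proof
      assume "\<rho> x \<in> flat C"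
      then have "\<rho> x - (\<Sum>i<n. s (x i) (g i)) \<in> flat C" using submod_diff[OF flat_submod _ gsF] by blast
      then show "comb x \<in> flat C" using \<rho>split[of x] by simp
    next
      assume "comb x \<in> flat C"
      then show "\<rho> x \<in> flat C" unfolding \<rho>split using submod_add[OF flat_submod _ gsF] by blast
    qed
    also have "\<dots> \<longleftrightarrow> (\<forall>i<n. x i \<in> max_ideal)" using key comb_J by blast
    finally show "\<rho> x \<in> flat C \<longleftrightarrow> (\<forall>i<n. x i \<in> max_ideal)" .
  qed
  show ?thesis using red X_free mir by blast
qed

end

theorem theorem4p13:
  fixes s :: "'r::comm_ring_1 \<Rightarrow> 'm::ab_group_add \<Rightarrow> 'm"
    and C :: "('m \<times> 'm) set"
  assumes "local_ring TYPE('r)"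
    and "is_module s"
    and "linear_relation s C"
    and "JM s \<subseteq> set_plus (sprime (rel_inv C)) (sprime C)"
    and "fin_dim_quot s (sharp C) (flat C)"
  shows "\<exists>X T \<rho>. reduction s C X T \<rho> \<and> free_mod X \<and> meets_in_radical C X \<rho>"
proof -
  have ctx: "ctx s C" by (rule ctx.intro[OF lr.intro[OF assms(2)] ctx_axioms.intro[OF assms(1,3,4)]])
  interpret ctx s C by (rule ctx)
  from exists_min[OF assms(5)] obtain S where S0: "finite S \<and> S \<subseteq> sharp C \<and> sharp C \<subseteq> set_plus (flat C) (rspan s S) \<and>
    (\<forall>S'. finite S' \<and> S' \<subseteq> sharp C \<and> sharp C \<subseteq> set_plus (flat C) (rspan s S') \<longrightarrow> card S \<le> card S')" ..
  have S: "finite S" "S \<subseteq> sharp C" "sharp C \<subseteq> set_plus (flat C) (rspan s S)"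
    "\<And>S'. finite S' \<Longrightarrow> S' \<subseteq> sharp C \<Longrightarrow> sharp C \<subseteq> set_plus (flat C) (rspan s S') \<Longrightarrow> card S \<le> card S'"
    using S0 by simp_all
  obtain m where m: "bij_betw m {0..<card S} S" using ex_bij_betw_nat_finite[OF S(1)] by blast
  then have m': "bij_betw m {..<card S} S" by (simp add: atLeast0LessThan)
  have bas: "bas s C S m (card S)" by (rule bas.intro[OF ctx bas_axioms.intro[OF S(1) S(2) S(3) S(4) m']])
  interpret bas s C S m "card S" by (rule bas)
  show ?thesis by (rule main)
qed

end
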